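(* Let $s<d$. For each $M\in\mathbb{N}$ let $\alpha_1,\dots,\alpha_M>0$ and let $B_1,\dots,B_M\in\mathbb{R}^{s\times d}$ be random matrices with all entries independent, $[B_m]_{i,j}\sim\mathcal{N}(0,1/\alpha_m)$ for $i\ne j$ and $[B_m]_{i,i}\sim\mathcal{N}(1/\sqrt{\alpha_m},1/\alpha_m)$. Consider the server model $y=\frac{1}{M}\sum_{m=1}^M B_m\sqrt{\alpha_m}g_m^{sp}(\theta)+\gamma$ with random operator $L_M=\frac{1}{M}(\sqrt{\alpha_1}B_1,\dots,\sqrt{\alpha_M}B_M)$, and the eavesdropper model $y_E=\frac{1}{M}\sum_{m=1}^M H_{E_m}B_m\sqrt{\alpha_m}g_m^{sp}(\theta)+\gamma$ with random operator $L_{E,M}=\frac{1}{M}(\sqrt{\alpha_1}H_{E_1}B_1,\dots,\sqrt{\alpha_M}H_{E_M}B_M)$, where $H_{E_m}\in\mathbb{R}^{s\times s}$ are random matrices with no assumption on their distribution. If for every $M\in\mathbb{N}$ $$\mathbb{E}[\operatorname{cond}(H_{E_1}(C_1+I_{s\times d}),\dots,H_{E_M}(C_M+I_{s\times d}))]>\mathbb{E}[\operatorname{cond}(C_1+I_{s\times d},\dots,C_M+I_{s\times d})],$$ where $C_1,\dots,C_M\in\mathbb{R}^{s\times d}$ have independent $\mathcal{N}(0,1)$ entries, then the server model is inverse secure with respect to the eavesdropper model, i.e. $\mathbb{E}[\operatorname{cond}(L_{E,M})]>\mathbb{E}[\operatorname{cond}(L_M)]$ for all $M\in\mathbb{N}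$.
   Context: For a matrix $X$ with $s$ rows and at least $s$ columns, $\operatorname{cond}(X)=\sigma_1(X)/\sigma_s(X)$, the ratio of its largest and $s$-th largest singular values. $I_{s\times d}$ is the $s\times d$ matrix with ones on the main diagonal and zeros elsewhere; $(X_1,\dots,X_M)$ denotes horizontal concatenation. The vectors $g_m^{sp}(\theta)\in\mathbb{R}^d$ are users' sparsified gradients and $\gamma$ is additive Gaussian noise. A server model with random operator $L_M$ is inverse secure with respect to an eavesdropper model with random operator $L_{E,M}$ if $\mathbb{E}[\operatorname{cond}(L_{E,M})]>\mathbb{E}[\operatorname{cond}(L_M)]$ for all $M\in\mathbb{N}$. *)

theory Defs
  imports "HOL-Probability.Probability" "Jordan_Normal_Form.Matrix" "Jordan_Normal_Form.Char_Poly"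
begin

(* singular values of a real matrix X with s rows (s <= number of columns):
   sigma X k = k-th largest singular value (k = 1..s), i.e. the square root of the
   k-th largest eigenvalue (with multiplicity) of X X^T *)
definition singular_value :: "real mat \<Rightarrow> nat \<Rightarrow> real" where
  "singular_value X k =
     sqrt (rev (sorted_list_of_multiset (proots (char_poly (X * transpose_mat X)))) ! (k - 1))"

definition cond :: "real mat \<Rightarrow> ennreal" where
  "cond X = (if singular_value X (dim_row X) = 0 then \<infinity>
             else ennreal (singular_value X 1 / singular_value X (dim_row X)))"

definition rect_id :: "nat \<Rightarrow> nat \<Rightarrow> real mat" where
  "rect_id s d = mat s d (\<lambda>(i, j). if i = j then 1 else 0)"

(* horizontal concatenation (X 1, ..., X M) of s x d matrices *)
definition hcat :: "nat \<Rightarrow> nat \<Rightarrow> nat \<Rightarrow> (nat \<Rightarrow> real mat) \<Rightarrow> real mat" where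
  "hcat s d M X = mat s (M * d) (\<lambda>(i, j). X (j div d + 1) $$ (i, j mod d))"

end

theory Submission
  imports Defs "Jordan_Normal_Form.Jordan_Normal_Form_Existence"
begin

lemma proots_smult_mat:
  fixes A :: "real mat"
  assumes A: "A \<in> carrier_mat n n" and k: "k \<noteq> 0"
  shows "proots (char_poly (k \<cdot>\<^sub>m A)) = image_mset ((*) k) (proots (char_poly A))"
proof (rule multiset_eqI)
  fix y
  interpret ofr: map_poly_inj_idom_divide_hom "complex_of_real" by unfold_locales auto
  have kA: "k \<cdot>\<^sub>m A \<in> carrier_mat n n" using A by simp
  have nz1: "char_poly (k \<cdot>\<^sub>m A) \<noteq> 0" using degree_monic_char_poly[OF kA] by auto
  have nz2: "char_poly A \<noteq> 0" using degree_monic_char_poly[OF A] by auto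
  have inj: "inj ((*) k)" using k by (auto simp: inj_def)
  have y: "y = k * (y / k)" using k by simp
  have "count (image_mset ((*) k) (proots (char_poly A))) y = count (proots (char_poly A)) (y / k)"
  proof -
    have "(*) k -` {y} = {y / k}" using k by (auto simp: field_simps)
    then show ?thesis by (cases "y / k \<in># proots (char_poly A)") (auto simp: count_image_mset not_in_iff)
  qed
  also have "\<dots> = order (y / k) (char_poly A)" using nz2 by simp
  also have "\<dots> = order (complex_of_real (y / k)) (map_poly complex_of_real (char_poly A))"
    by (rule ofr.order_hom[symmetric])
  also have "map_poly complex_of_real (char_poly A) = char_poly (map_mat complex_of_real A)"
    by (rule of_real_hom.char_poly_hom[OF A, symmetric])
  also have "order (complex_of_real (y / k)) \<dots> = order (complex_of_real y) (char_poly (complex_of_real k \<cdot>\<^sub>m map_mat complex_of_real A))"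
    using order_char_poly_smult[of "map_mat complex_of_real A" n "complex_of_real k" "complex_of_real y"] A k
    by simp
  also have "complex_of_real k \<cdot>\<^sub>m map_mat complex_of_real A = map_mat complex_of_real (k \<cdot>\<^sub>m A)"
    by (rule eq_matI, auto)
  also have "char_poly \<dots> = map_poly complex_of_real (char_poly (k \<cdot>\<^sub>m A))"
    by (rule of_real_hom.char_poly_hom[OF kA])
  also have "order (complex_of_real y) \<dots> = order y (char_poly (k \<cdot>\<^sub>m A))"
    by (rule ofr.order_hom)
  also have "\<dots> = count (proots (char_poly (k \<cdot>\<^sub>m A))) y" using nz1 by simp
  finally show "count (proots (char_poly (k \<cdot>\<^sub>m A))) y = count (image_mset ((*) k) (proots (char_poly A))) y" by simp
qed

lemma sorted_image_mono:
  fixes c :: real assumes c: "c > 0"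
  shows "sorted_list_of_multiset (image_mset ((*) c) M) = map ((*) c) (sorted_list_of_multiset M)"
proof -
  have e: "image_mset ((*) c) M = mset (map ((*) c) (sorted_list_of_multiset M))" by simp
  have "sorted (map ((*) c) (sorted_list_of_multiset M))"
    using c by (auto simp: sorted_map intro: sorted_wrt_mono_rel[OF _ sorted_sorted_list_of_multiset])
  then show ?thesis unfolding e sorted_list_of_multiset_mset
    by (intro properties_for_sort) auto
qed
lemma proots_linear_prod: "proots (\<Prod>a\<leftarrow>as. [:- a, 1:]) = mset (as :: 'a :: idom list)"
proof (induction as)
  case (Cons a as)
  have nz: "(\<Prod>a\<leftarrow>as. [:- a, 1:]) \<noteq> 0" by (auto simp: prod_list_zero_iff)
  have "proots (\<Prod>a\<leftarrow>a # as. [:- a, 1:]) = proots ([:- a, 1:] * (\<Prod>a\<leftarrow>as. [:- a, 1:]))"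
    by simp
  also have "\<dots> = proots [:- a, 1:] + proots (\<Prod>a\<leftarrow>as. [:- a, 1:])"
    by (rule proots_mult) (use nz in auto)
  also have "\<dots> = mset (a # as)" using Cons proots_linear_factor[of "- a"] by simp
  finally show ?case .
qed simp

lemma sym_real_eigenvalue:
  fixes A :: "real mat"
  assumes A: "A \<in> carrier_mat n n" and sym: "transpose_mat A = A"
    and ev: "eigenvalue (map_mat complex_of_real A) a"
  shows "Im a = 0"
proof -
  let ?Ac = "map_mat complex_of_real A"
  from ev obtain v where v: "v \<in> carrier_vec n" "v \<noteq> 0\<^sub>v n" "?Ac *\<^sub>v v = a \<cdot>\<^sub>v v"
    unfolding eigenvalue_def eigenvector_def using A by auto
  have symij: "A $$ (j, i) = A $$ (i, j)" if "i < n" "j < n" for i j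
    using arg_cong[OF sym, of "\<lambda>X. X $$ (i, j)"] that A by auto
  have row: "(\<Sum>j<n. complex_of_real (A $$ (i, j)) * v $ j) = a * v $ i" if i: "i < n" for i
  proof -
    have "(?Ac *\<^sub>v v) $ i = (a \<cdot>\<^sub>v v) $ i" using v(3) by simp
    then show ?thesis using i A v(1)
      by (auto simp: scalar_prod_def lessThan_atLeast0)
  qed
  define q where "q = (\<Sum>i<n. cnj (v $ i) * (\<Sum>j<n. complex_of_real (A $$ (i, j)) * v $ j))"
  define N where "N = (\<Sum>i<n. cnj (v $ i) * v $ i)"
  have "q = (\<Sum>i<n. a * (cnj (v $ i) * v $ i))" unfolding q_def
    by (rule sum.cong) (auto simp: row)
  then have qN: "q = a * N" unfolding N_def by (simp add: sum_distrib_left)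
  have "cnj q = (\<Sum>i<n. \<Sum>j<n. complex_of_real (A $$ (i, j)) * v $ i * cnj (v $ j))"
    unfolding q_def by (simp add: sum_distrib_left mult.commute mult.left_commute)
  also have "\<dots> = (\<Sum>j<n. \<Sum>i<n. complex_of_real (A $$ (i, j)) * v $ i * cnj (v $ j))"
    by (rule sum.swap)
  also have "\<dots> = q" unfolding q_def
    by (auto simp: sum_distrib_left mult.commute mult.left_commute symij intro!: sum.cong)
  finally have cq: "cnj q = q" .
  have Nreal: "N = complex_of_real (\<Sum>i<n. (cmod (v $ i))\<^sup>2)"
    unfolding N_def of_real_sum by (rule sum.cong) (simp_all only: complex_norm_square mult.commute refl)
  obtain i where i: "i < n" "v $ i \<noteq> 0" using v(1,2) by (metis eq_vecI carrier_vecD index_zero_vec)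
  have "(\<Sum>i<n. (cmod (v $ i))\<^sup>2) \<ge> (cmod (v $ i))\<^sup>2"
    by (rule member_le_sum) (use i in auto)
  moreover have "(cmod (v $ i))\<^sup>2 > 0" using i by simp
  ultimately have "N \<noteq> 0" unfolding Nreal by (auto simp del: of_real_sum)
  have "cnj a * N = a * N" using cq unfolding qN Nreal by simp
  with \<open>N \<noteq> 0\<close> have "cnj a = a" by simp
  then show ?thesis by (metis Reals_cnj_iff complex_is_Real_iff)
qed
lemma size_proots_sym:
  fixes A :: "real mat"
  assumes A: "A \<in> carrier_mat n n" and sym: "transpose_mat A = A"
  shows "size (proots (char_poly A)) = n"
proof -
  interpret ofr: map_poly_inj_idom_divide_hom "complex_of_real" by unfold_locales auto
  let ?Ac = "map_mat complex_of_real A"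
  have Ac: "?Ac \<in> carrier_mat n n" using A by simp
  obtain as where cp: "char_poly ?Ac = (\<Prod>a\<leftarrow>as. [:- a, 1:])" and len: "length as = n"
    using char_poly_factorized[OF Ac] by blast
  have nzc: "char_poly ?Ac \<noteq> 0" using degree_monic_char_poly[OF Ac] by auto
  have nz: "char_poly A \<noteq> 0" using degree_monic_char_poly[OF A] by auto
  have pr: "proots (char_poly ?Ac) = mset as" unfolding cp by (rule proots_linear_prod)
  have real: "Im a = 0" if a: "a \<in> set as" for a
  proof -
    have "a \<in># proots (char_poly ?Ac)" using a pr by simp
    then have "poly (char_poly ?Ac) a = 0" using nzc by simp
    then have "eigenvalue ?Ac a" using eigenvalue_root_char_poly[OF Ac] by simp
    then show ?thesis by (rule sym_real_eigenvalue[OF A sym])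
  qed
  define bs where "bs = map Re as"
  have asbs: "as = map complex_of_real bs" unfolding bs_def
    by (rule nth_equalityI) (auto simp: complex_eq_iff real)
  have "proots (char_poly A) = mset bs"
  proof (rule multiset_eqI)
    fix x
    have "count (proots (char_poly A)) x = order x (char_poly A)" using nz by simp
    also have "\<dots> = order (complex_of_real x) (map_poly complex_of_real (char_poly A))"
      by (rule ofr.order_hom[symmetric])
    also have "map_poly complex_of_real (char_poly A) = char_poly ?Ac"
      by (rule of_real_hom.char_poly_hom[OF A, symmetric])
    also have "order (complex_of_real x) (char_poly ?Ac) = count (mset as) (complex_of_real x)"
      using nzc pr by (metis count_proots)
    also have "\<dots> = count (mset bs) x" unfolding asbs
      by (induction bs) auto
    finally show "count (proots (char_poly A)) x = count (mset bs) x" .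
  qed
  then show ?thesis using len by (simp add: bs_def)
qed
lemma sv_scale:
  fixes X :: "real mat"
  assumes X: "X \<in> carrier_mat n m" and c: "c > 0" and k: "1 \<le> k" "k \<le> n"
  shows "singular_value (c \<cdot>\<^sub>m X) k = c * singular_value X k"
proof -
  let ?A = "X * transpose_mat X"
  have A: "?A \<in> carrier_mat n n" using X by simp
  have sym: "transpose_mat ?A = ?A" using X by (simp add: transpose_mult[of X n m "transpose_mat X" n])
  have tr: "transpose_mat (c \<cdot>\<^sub>m X) = c \<cdot>\<^sub>m transpose_mat X" by (rule eq_matI) auto
  have ss: "a \<cdot>\<^sub>m (b \<cdot>\<^sub>m Y) = (a * b) \<cdot>\<^sub>m Y" for a b :: real and Y :: "real mat"
    by (rule eq_matI) auto
  have e: "(c \<cdot>\<^sub>m X) * transpose_mat (c \<cdot>\<^sub>m X) = (c * c) \<cdot>\<^sub>m ?A"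
  proof -
    have "(c \<cdot>\<^sub>m X) * (c \<cdot>\<^sub>m transpose_mat X) = c \<cdot>\<^sub>m (X * (c \<cdot>\<^sub>m transpose_mat X))"
      by (rule mult_smult_assoc_mat) (use X in auto)
    also have "X * (c \<cdot>\<^sub>m transpose_mat X) = c \<cdot>\<^sub>m ?A"
      by (rule mult_smult_distrib) (use X in auto)
    finally show ?thesis unfolding tr ss .
  qed
  define L where "L = sorted_list_of_multiset (proots (char_poly ?A))"
  have len: "length L = n" unfolding L_def using size_proots_sym[OF A sym]
    by (metis mset_sorted_list_of_multiset size_mset)
  have cc: "c * c > 0" using c by simp
  have "singular_value (c \<cdot>\<^sub>m X) k = sqrt (rev (map ((*) (c * c)) L) ! (k - 1))"
    unfolding singular_value_def e proots_smult_mat[OF A cc[THEN less_imp_neq, symmetric]]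
      sorted_image_mono[OF cc] L_def ..
  also have "\<dots> = sqrt ((c * c) * (rev L ! (k - 1)))" using k len by (simp add: rev_map)
  also have "\<dots> = c * sqrt (rev L ! (k - 1))" using c by (simp add: real_sqrt_mult)
  also have "\<dots> = c * singular_value X k" unfolding singular_value_def L_def ..
  finally show ?thesis .
qed

lemma cond_scale:
  fixes X :: "real mat"
  assumes X: "X \<in> carrier_mat n m" and c: "c > 0" and n: "n > 0"
  shows "cond (c \<cdot>\<^sub>m X) = cond X"
proof -
  have d: "dim_row (c \<cdot>\<^sub>m X) = n" "dim_row X = n" using X by auto
  have 1: "singular_value (c \<cdot>\<^sub>m X) 1 = c * singular_value X 1" by (rule sv_scale[OF X c]) (use n in auto)
  have 2: "singular_value (c \<cdot>\<^sub>m X) n = c * singular_value X n" by (rule sv_scale[OF X c]) (use n in auto)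
  show ?thesis unfolding cond_def d 1 2 using c by auto
qed

theorem proposition5:
  fixes P :: "'w measure"
    and s d :: nat
    and \<alpha> :: "nat \<Rightarrow> real"
    and B H C :: "nat \<Rightarrow> 'w \<Rightarrow> real mat"
  assumes "prob_space P"
    and "0 < s" and "s < d"
    and alpha_pos: "\<And>m. m \<ge> 1 \<Longrightarrow> \<alpha> m > 0"
    and B_dim: "\<And>m \<omega>. m \<ge> 1 \<Longrightarrow> \<omega> \<in> space P \<Longrightarrow> B m \<omega> \<in> carrier_mat s d"
    and H_dim: "\<And>m \<omega>. m \<ge> 1 \<Longrightarrow> \<omega> \<in> space P \<Longrightarrow> H m \<omega> \<in> carrier_mat s s"
    and H_rv: "\<And>m i j. m \<ge> 1 \<Longrightarrow> i < s \<Longrightarrow> j < s \<Longrightarrow>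
                 (\<lambda>\<omega>. H m \<omega> $$ (i, j)) \<in> borel_measurable P"
    and B_indep: "prob_space.indep_vars P (\<lambda>_. borel)
                    (\<lambda>(m, i, j) \<omega>. B m \<omega> $$ (i, j)) {(m, i, j). m \<ge> 1 \<and> i < s \<and> j < d}"
    and B_offdiag: "\<And>m i j. m \<ge> 1 \<Longrightarrow> i < s \<Longrightarrow> j < d \<Longrightarrow> i \<noteq> j \<Longrightarrow>
                 distributed P lborel (\<lambda>\<omega>. B m \<omega> $$ (i, j)) (normal_density 0 (sqrt (1 / \<alpha> m)))"
    and B_diag: "\<And>m i. m \<ge> 1 \<Longrightarrow> i < s \<Longrightarrow>
                 distributed P lborel (\<lambda>\<omega>. B m \<omega> $$ (i, i))
                   (normal_density (1 / sqrt (\<alpha> m)) (sqrt (1 / \<alpha> m)))"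
    and C_def: "\<And>m \<omega>. m \<ge> 1 \<Longrightarrow> \<omega> \<in> space P \<Longrightarrow>
                 C m \<omega> = sqrt (\<alpha> m) \<cdot>\<^sub>m B m \<omega> - rect_id s d"
    and hyp: "\<And>M. M \<ge> 1 \<Longrightarrow>
                 (\<integral>\<^sup>+ \<omega>. cond (hcat s d M (\<lambda>m. H m \<omega> * (C m \<omega> + rect_id s d))) \<partial>P)
               > (\<integral>\<^sup>+ \<omega>. cond (hcat s d M (\<lambda>m. C m \<omega> + rect_id s d)) \<partial>P)"
  shows "\<forall>M \<ge> 1.
           (\<integral>\<^sup>+ \<omega>. cond ((1 / real M) \<cdot>\<^sub>m hcat s d M (\<lambda>m. sqrt (\<alpha> m) \<cdot>\<^sub>m (H m \<omega> * B m \<omega>))) \<partial>P)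
         > (\<integral>\<^sup>+ \<omega>. cond ((1 / real M) \<cdot>\<^sub>m hcat s d M (\<lambda>m. sqrt (\<alpha> m) \<cdot>\<^sub>m B m \<omega>)) \<partial>P)"
  proof (intro allI impI)
  fix M :: nat assume M: "M \<ge> 1"
  have hcat_cong: "hcat s d M X = hcat s d M Y" if "\<And>m. m \<ge> 1 \<Longrightarrow> X m = Y m" for X Y
  proof -
    have "(\<lambda>(i, j). X (j div d + 1) $$ (i, j mod d)) = (\<lambda>(i, j). Y (j div d + 1) $$ (i, j mod d))"
      using that by auto
    then show ?thesis unfolding hcat_def by simp
  qed
  have hcat_carr: "hcat s d M X \<in> carrier_mat s (M * d)" for X unfolding hcat_def by simp
  have CI: "C m \<omega> + rect_id s d = sqrt (\<alpha> m) \<cdot>\<^sub>m B m \<omega>" if "m \<ge> 1" "\<omega> \<in> space P" for m \<omega>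
  proof -
    have Bc: "B m \<omega> \<in> carrier_mat s d" using B_dim that by auto
    have Ic: "rect_id s d \<in> carrier_mat s d" unfolding rect_id_def by simp
    show ?thesis unfolding C_def[OF that] by (rule eq_matI) (use Bc Ic in auto)
  qed
  have Mpos: "1 / real M > 0" using M by simp
  have eq1: "cond ((1 / real M) \<cdot>\<^sub>m hcat s d M (\<lambda>m. sqrt (\<alpha> m) \<cdot>\<^sub>m (H m \<omega> * B m \<omega>)))
      = cond (hcat s d M (\<lambda>m. H m \<omega> * (C m \<omega> + rect_id s d)))" if w: "\<omega> \<in> space P" for \<omega>
  proof -
    have "hcat s d M (\<lambda>m. H m \<omega> * (C m \<omega> + rect_id s d)) = hcat s d M (\<lambda>m. sqrt (\<alpha> m) \<cdot>\<^sub>m (H m \<omega> * B m \<omega>))"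
    proof (rule hcat_cong)
      fix m :: nat assume m: "m \<ge> 1"
      show "H m \<omega> * (C m \<omega> + rect_id s d) = sqrt (\<alpha> m) \<cdot>\<^sub>m (H m \<omega> * B m \<omega>)"
        unfolding CI[OF m w] by (rule mult_smult_distrib[of _ s s _ d]) (use H_dim B_dim m w in auto)
    qed
    then show ?thesis using cond_scale[OF hcat_carr Mpos] \<open>0 < s\<close> by simp
  qed
  have eq2: "cond ((1 / real M) \<cdot>\<^sub>m hcat s d M (\<lambda>m. sqrt (\<alpha> m) \<cdot>\<^sub>m B m \<omega>))
      = cond (hcat s d M (\<lambda>m. C m \<omega> + rect_id s d))" if w: "\<omega> \<in> space P" for \<omega>
  proof -
    have "hcat s d M (\<lambda>m. C m \<omega> + rect_id s d) = hcat s d M (\<lambda>m. sqrt (\<alpha> m) \<cdot>\<^sub>m B m \<omega>)"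
      by (rule hcat_cong) (use CI w in auto)
    then show ?thesis using cond_scale[OF hcat_carr Mpos] \<open>0 < s\<close> by simp
  qed
  have i1: "(\<integral>\<^sup>+ \<omega>. cond ((1 / real M) \<cdot>\<^sub>m hcat s d M (\<lambda>m. sqrt (\<alpha> m) \<cdot>\<^sub>m (H m \<omega> * B m \<omega>))) \<partial>P)
     = (\<integral>\<^sup>+ \<omega>. cond (hcat s d M (\<lambda>m. H m \<omega> * (C m \<omega> + rect_id s d))) \<partial>P)"
    by (rule nn_integral_cong) (rule eq1)
  have i2: "(\<integral>\<^sup>+ \<omega>. cond ((1 / real M) \<cdot>\<^sub>m hcat s d M (\<lambda>m. sqrt (\<alpha> m) \<cdot>\<^sub>m B m \<omega>)) \<partial>P)
     = (\<integral>\<^sup>+ \<omega>. cond (hcat s d M (\<lambda>m. C m \<omega> + rect_id s d)) \<partial>P)"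
    by (rule nn_integral_cong) (rule eq2)
  show "(\<integral>\<^sup>+ \<omega>. cond ((1 / real M) \<cdot>\<^sub>m hcat s d M (\<lambda>m. sqrt (\<alpha> m) \<cdot>\<^sub>m (H m \<omega> * B m \<omega>))) \<partial>P)
     > (\<integral>\<^sup>+ \<omega>. cond ((1 / real M) \<cdot>\<^sub>m hcat s d M (\<lambda>m. sqrt (\<alpha> m) \<cdot>\<^sub>m B m \<omega>)) \<partial>P)"
    unfolding i1 i2 by (rule hyp[OF M])
qed

end
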